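(* Every $(P_3\cup K_1)$-free graph is perfectly divisible.
   Context: All graphs are finite and simple. $P_3\cup K_1$ is the disjoint union of a path on three vertices and an isolated vertex. A graph is $H$-free if it has no induced subgraph isomorphic to $H$. A graph is perfect if every induced subgraph $H$ satisfies $\chi(H)=\omega(H)$. A graph $G$ is perfectly divisible if for every induced subgraph $H$ of $G$, $V(H)$ can be partitioned into two sets $A,B$ such that $H[A]$ is perfect and $\omega(H[B])<\omega(H)$. *)

theory Defs
  imports Main
begin

text \<open>A finite simple graph is a finite vertex set V with a symmetric irreflexive
adjacency relation E (only its restriction to V matters).\<close>

definition graph :: "'a set \<Rightarrow> ('a \<Rightarrow> 'a \<Rightarrow> bool) \<Rightarrow> bool" where
  "graph V E \<longleftrightarrow> finite V \<and> (\<forall>x\<in>V. \<forall>y\<in>V. E x y \<longleftrightarrow> E y x) \<and> (\<forall>x\<in>V. \<not> E x x)"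

text \<open>Induced subgraphs are given by a vertex subset S of V, keeping the relation E.\<close>

definition clique :: "('a \<Rightarrow> 'a \<Rightarrow> bool) \<Rightarrow> 'a set \<Rightarrow> bool" where
  "clique E K \<longleftrightarrow> (\<forall>x\<in>K. \<forall>y\<in>K. x \<noteq> y \<longrightarrow> E x y)"

definition omega :: "'a set \<Rightarrow> ('a \<Rightarrow> 'a \<Rightarrow> bool) \<Rightarrow> nat" where
  "omega S E = Max {card K | K. K \<subseteq> S \<and> clique E K}"

definition proper_colouring :: "'a set \<Rightarrow> ('a \<Rightarrow> 'a \<Rightarrow> bool) \<Rightarrow> ('a \<Rightarrow> nat) \<Rightarrow> nat \<Rightarrow> bool" where
  "proper_colouring S E c k \<longleftrightarrow> (\<forall>x\<in>S. c x < k) \<and> (\<forall>x\<in>S. \<forall>y\<in>S. E x y \<longrightarrow> c x \<noteq> c y)"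

definition chi :: "'a set \<Rightarrow> ('a \<Rightarrow> 'a \<Rightarrow> bool) \<Rightarrow> nat" where
  "chi S E = (LEAST k. \<exists>c. proper_colouring S E c k)"

definition perfect :: "'a set \<Rightarrow> ('a \<Rightarrow> 'a \<Rightarrow> bool) \<Rightarrow> bool" where
  "perfect S E \<longleftrightarrow> (\<forall>T\<subseteq>S. chi T E = omega T E)"

definition has_induced :: "'a set \<Rightarrow> ('a \<Rightarrow> 'a \<Rightarrow> bool) \<Rightarrow> 'b set \<Rightarrow> ('b \<Rightarrow> 'b \<Rightarrow> bool) \<Rightarrow> bool" where
  "has_induced S E VH EH \<longleftrightarrow>
     (\<exists>f. inj_on f VH \<and> f ` VH \<subseteq> S \<and> (\<forall>x\<in>VH. \<forall>y\<in>VH. E (f x) (f y) \<longleftrightarrow> EH x y))"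

definition H_free :: "'a set \<Rightarrow> ('a \<Rightarrow> 'a \<Rightarrow> bool) \<Rightarrow> 'b set \<Rightarrow> ('b \<Rightarrow> 'b \<Rightarrow> bool) \<Rightarrow> bool" where
  "H_free S E VH EH \<longleftrightarrow> \<not> has_induced S E VH EH"

definition P3K1_V :: "nat set" where "P3K1_V = {0,1,2,3}"
definition P3K1_E :: "nat \<Rightarrow> nat \<Rightarrow> bool" where
  "P3K1_E x y \<longleftrightarrow> {x,y} = {0,1} \<or> {x,y} = {1,2::nat}"

definition perfectly_divisible :: "'a set \<Rightarrow> ('a \<Rightarrow> 'a \<Rightarrow> bool) \<Rightarrow> bool" where
  "perfectly_divisible V E \<longleftrightarrow>
     (\<forall>H\<subseteq>V. H \<noteq> {} \<longrightarrow> (\<exists>A B. A \<union> B = H \<and> A \<inter> B = {} \<and> perfect A E \<and> omega B E < omega H E))"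

end

theory Submission
  imports Defs
begin

lemma omega_facts:
  assumes "finite T"
  shows "\<And>K. K \<subseteq> T \<Longrightarrow> clique E K \<Longrightarrow> card K \<le> omega T E"
    and "\<exists>K. K \<subseteq> T \<and> clique E K \<and> card K = omega T E"
proof -
  let ?S = "{card K | K. K \<subseteq> T \<and> clique E K}"
  have fin: "finite ?S"
  proof -
    have "?S \<subseteq> card ` Pow T" by auto
    thus ?thesis using assms by (meson finite_Pow_iff finite_imageI finite_subset)
  qed
  have "0 \<in> ?S" by (auto intro!: exI[of _ "{}"] simp: clique_def)
  hence ne: "?S \<noteq> {}" by blast
  show "\<And>K. K \<subseteq> T \<Longrightarrow> clique E K \<Longrightarrow> card K \<le> omega T E"
    unfolding omega_def using fin by (intro Max_ge) auto
  have "omega T E \<in> ?S" unfolding omega_def using fin ne by (rule Max_in)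
  thus "\<exists>K. K \<subseteq> T \<and> clique E K \<and> card K = omega T E" by auto
qed

lemma cluster_chi:
  assumes fin: "finite T"
    and irr: "\<forall>x\<in>T. \<not> E x x"
    and sym: "\<forall>x\<in>T. \<forall>y\<in>T. E x y \<longrightarrow> E y x"
    and tr: "\<forall>x\<in>T. \<forall>y\<in>T. \<forall>z\<in>T. E x y \<longrightarrow> E y z \<longrightarrow> x \<noteq> z \<longrightarrow> E x z"
  shows "chi T E = omega T E"
proof -
  have lower: "omega T E \<le> k" if pc: "proper_colouring T E c k" for c k
  proof -
    obtain K where K: "K \<subseteq> T" "clique E K" "card K = omega T E"
      using omega_facts(2)[OF fin] by blast
    have "inj_on c K"
      using K pc unfolding inj_on_def clique_def proper_colouring_def by blast
    moreover have "c ` K \<subseteq> {..<k}" using K pc unfolding proper_colouring_def by auto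
    ultimately have "card K \<le> card {..<k}" by (intro card_inj_on_le) auto
    thus ?thesis using K by simp
  qed
  define cls where "cls x = {y\<in>T. x = y \<or> E x y}" for x
  define g where "g C = (SOME h. bij_betw h C {0..<card C})" for C :: "'a set"
  define c where "c x = g (cls x) x" for x
  have gbij: "bij_betw (g C) C {0..<card C}" if "finite C" for C
    unfolding g_def using ex_bij_betw_finite_nat[OF that] by (rule someI_ex)
  have clsfin: "finite (cls x)" for x unfolding cls_def using fin by auto
  have clscl: "clique E (cls x)" if "x \<in> T" for x
    unfolding clique_def cls_def using that sym tr by blast
  have clseq: "cls x = cls y" if "x \<in> T" "y \<in> T" "E x y" for x y
    unfolding cls_def using that sym tr irr by blast
  have "proper_colouring T E c (omega T E)"
    unfolding proper_colouring_def
  proof safe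
    fix x assume x: "x \<in> T"
    have "x \<in> cls x" using x unfolding cls_def by auto
    hence "c x < card (cls x)"
      using gbij[OF clsfin[of x]] unfolding c_def bij_betw_def by auto
    moreover have "card (cls x) \<le> omega T E"
      using omega_facts(1)[OF fin _ clscl[OF x]] unfolding cls_def by auto
    ultimately show "c x < omega T E" by simp
  next
    fix x y assume xy: "x \<in> T" "y \<in> T" "E x y" "c x = c y"
    have "x \<noteq> y" using xy irr by auto
    moreover have "x \<in> cls x" "y \<in> cls x" using xy unfolding cls_def by auto
    moreover have "c y = g (cls x) y" using clseq[OF xy(1-3)] unfolding c_def by simp
    ultimately show False using xy(4) gbij[OF clsfin[of x]]
      unfolding c_def bij_betw_def inj_on_def by metis
  qed
  thus ?thesis unfolding chi_def
    by (intro Least_equality) (auto intro: lower)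
qed

theorem corollary3p3:
  fixes V :: "'a set" and E :: "'a \<Rightarrow> 'a \<Rightarrow> bool"
  assumes "graph V E"
    and "H_free V E P3K1_V P3K1_E"
  shows "perfectly_divisible V E"
  unfolding perfectly_divisible_def
proof (intro allI impI)
  fix H assume HV: "H \<subseteq> V" and Hne: "H \<noteq> {}"
  have finV: "finite V" and symV: "\<forall>x\<in>V. \<forall>y\<in>V. E x y \<longleftrightarrow> E y x" and irrV: "\<forall>x\<in>V. \<not> E x x"
    using assms(1) unfolding graph_def by auto
  have finH: "finite H" using finV HV finite_subset by blast
  obtain v where v: "v \<in> H" using Hne by blast
  define B where "B = {u\<in>H. E v u}"
  define A where "A = H - B"
  have "omega B E < omega H E"
  proof -
    have finB: "finite B" using finH unfolding B_def by auto
    obtain K where K: "K \<subseteq> B" "clique E K" "card K = omega B E"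
      using omega_facts(2)[OF finB] by blast
    have vK: "v \<notin> K" using K v HV irrV unfolding B_def by auto
    have "clique E (insert v K)"
      using K v HV symV unfolding clique_def B_def by (auto simp: subset_iff) 
    moreover have "insert v K \<subseteq> H" using K v unfolding B_def by auto
    ultimately have "card (insert v K) \<le> omega H E" using omega_facts(1)[OF finH] by blast
    moreover have "finite K" using K finB finite_subset by blast
    ultimately show ?thesis using vK K by simp
  qed
  moreover have "perfect A E"
    unfolding perfect_def
  proof (intro allI impI)
    fix T assume TA: "T \<subseteq> A"
    have AH: "A \<subseteq> H" unfolding A_def by auto
    have TV: "T \<subseteq> V" using TA AH HV by auto
    show "chi T E = omega T E"
    proof (rule cluster_chi)
      show "finite T" using TV finV finite_subset by blast
      show "\<forall>x\<in>T. \<not> E x x" using TV irrV by auto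
      show "\<forall>x\<in>T. \<forall>y\<in>T. E x y \<longrightarrow> E y x" using TV symV by auto
      show "\<forall>x\<in>T. \<forall>y\<in>T. \<forall>z\<in>T. E x y \<longrightarrow> E y z \<longrightarrow> x \<noteq> z \<longrightarrow> E x z"
      proof (intro ballI impI, rule ccontr)
        fix x y z assume xyz: "x \<in> T" "y \<in> T" "z \<in> T" and exy: "E x y" and eyz: "E y z"
          and xz: "x \<noteq> z" and nxz: "\<not> E x z"
        have inA: "x \<in> A" "y \<in> A" "z \<in> A" using xyz TA by auto
        have inV: "x \<in> V" "y \<in> V" "z \<in> V" "v \<in> V" using xyz TV v HV by auto
        have nv: "\<And>u. u \<in> A \<Longrightarrow> \<not> E v u" using v unfolding A_def B_def by auto
        have nv': "\<And>u. u \<in> A \<Longrightarrow> \<not> E u v" using nv symV inV v HV AH by (meson subsetD)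
        have xy: "x \<noteq> y" using exy irrV inV by auto
        have yz: "y \<noteq> z" using eyz irrV inV by auto
        have xv: "x \<noteq> v" using exy nv inA by auto
        have yv: "y \<noteq> v" using exy nv' inA by auto
        have zv: "z \<noteq> v" using eyz nv' inA by auto
        have eyx: "E y x" using exy symV inV by auto
        have ezy: "E z y" using eyz symV inV by auto
        have nzx: "\<not> E z x" using nxz symV inV by auto
        define f where "f n = (if n = 0 then x else if n = 1 then y else if n = 2 then z else v)" for n :: nat
        have "has_induced V E P3K1_V P3K1_E"
          unfolding has_induced_def
        proof (intro exI conjI)
          show "inj_on f P3K1_V" unfolding inj_on_def P3K1_V_def f_def
            using xy yz xz xv yv zv by auto
          show "f ` P3K1_V \<subseteq> V" unfolding P3K1_V_def f_def using inV by auto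
          show "\<forall>a\<in>P3K1_V. \<forall>b\<in>P3K1_V. E (f a) (f b) = P3K1_E a b"
            unfolding P3K1_V_def f_def P3K1_E_def
            using exy eyz nxz eyx ezy nzx nv nv' inA irrV inV
            by (auto simp: doubleton_eq_iff)
        qed
        thus False using assms(2) unfolding H_free_def by blast
      qed
    qed
  qed
  moreover have "A \<union> B = H" "A \<inter> B = {}" unfolding A_def B_def by auto
  ultimately show "\<exists>A B. A \<union> B = H \<and> A \<inter> B = {} \<and> perfect A E \<and> omega B E < omega H E"
    by blast
qed

end
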